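(* Let $n\in\mathbb N$ and let $\rho:\mathbb H^n\to\mathbb R$ be a $C^2$-function (in the real coordinates) for which there is a constant $\epsilon_0>0$ such that $$\sum_{l,m=1}^{4n}\frac{\partial^2\rho(z)}{\partial x_l\,\partial x_m}\,t_lt_m\ \ge\ \epsilon_0|t|^2\qquad\text{for all } z\in\mathbb H^n,\ t\in\mathbb R^{4n},$$ and let $U:=\{z\in\mathbb H^n:\rho(z)<0\}$. Define $v_\rho:\mathbb H^n\to\mathbb H^n$ by $v_\rho(z):=(\,{}^1v(z),\dots,{}^nv(z))$ with ${}^lv(z):=\sum_{m=1}^4\frac{\partial\rho(z)}{\partial x_{4(l-1)+m}}\,S_m$. Then $v_\rho$ is a quaternion boundary distinguishing map for $U$: it is a $C^1$ map and $$\langle v_\rho(\zeta);\zeta-z\rangle\neq 0\qquad\text{for all }\zeta\in\partial U,\ z\in U .$$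
   Context: $\mathbb H$ denotes the quaternions with real basis $S_1=e$ (the unit), $S_2=i$, $S_3=j$, $S_4=k$, $i^2=j^2=k^2=-e$, $ij=-ji=k$; for $a=a_1e+a_2i+a_3j+a_4k$ its conjugate is $\tilde a=a_1e-a_2i-a_3j-a_4k$. A point $z\in\mathbb H^n$ is written $z=({}^1z,\dots,{}^nz)$ with ${}^lz=\sum_{m=1}^4 x_{4(l-1)+m}S_m$, $x_r\in\mathbb R$, and $|t|$ is the Euclidean norm on $\mathbb R^{4n}$. The scalar product is $\langle\zeta;z\rangle:=\sum_{l=1}^n {}^l\tilde\zeta\,{}^lz\in\mathbb H$. (In the paper's notation, ${}^lv=\sum_m (\partial\rho/\partial\,{}^lz).S_m\,S_m$, where $(\partial\rho/\partial\,{}^lz).S_m$ is the derivative of $\rho$ in the direction $S_m$ of the $l$-th quaternion coordinate.) A quaternion boundary distinguishing map for a bounded open set $U\subset\mathbb H^n$ is a quaternion-valued $C^1$ map $\psi(\zeta,z)$ defined on $V\times U$, $V$ a neighbourhood of $\partial U$, with $\langle\psi(\zeta,z);\zeta-z\rangle\neq0$ for all $(\zeta,z)\in\partial U\times U$; here $\psi(\zeta,z)=v_\rho(\zeta)$. *)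

theory Defs
  imports "HOL-Analysis.Analysis"
begin

text \<open>Quaternions are represented as real 4-vectors a = a1 e + a2 i + a3 j + a4 k,
  with components a$1, a$2, a$3, a$4 (indices of the numeral type 4).
  H^n is represented as real^4^'n, with z$l$m the real coordinate x_{4(l-1)+m}.\<close>

type_synonym quat = "real^4"
type_synonym 'n hq = "quat^'n"

definition qS :: "4 \<Rightarrow> quat" where
  "qS m = axis m 1"   \<comment> \<open>S_1 = e, S_2 = i, S_3 = j, S_4 = k\<close>

definition qmult :: "quat \<Rightarrow> quat \<Rightarrow> quat" where
  "qmult a b = vector
     [a$1*b$1 - a$2*b$2 - a$3*b$3 - a$4*b$4,
      a$1*b$2 + a$2*b$1 + a$3*b$4 - a$4*b$3,
      a$1*b$3 - a$2*b$4 + a$3*b$1 + a$4*b$2,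
      a$1*b$4 + a$2*b$3 - a$3*b$2 + a$4*b$1]"

definition qconj :: "quat \<Rightarrow> quat" where
  "qconj a = vector [a$1, - a$2, - a$3, - a$4]"

definition qinner :: "quat^('n::finite) \<Rightarrow> quat^'n \<Rightarrow> quat" where
  "qinner \<zeta> z = (\<Sum>l\<in>UNIV. qmult (qconj (\<zeta>$l)) (z$l))"

definition qe :: "('n::finite) \<Rightarrow> 4 \<Rightarrow> quat^'n" where
  "qe l m = axis l (axis m 1)"

definition pd :: "('a::real_normed_vector \<Rightarrow> 'b::real_normed_vector) \<Rightarrow> 'a \<Rightarrow> 'a \<Rightarrow> 'b" where
  "pd f b x = vector_derivative (\<lambda>s. f (x + s *\<^sub>R b)) (at 0)"

definition C1_on :: "'a::euclidean_space set \<Rightarrow> ('a \<Rightarrow> 'b::real_normed_vector) \<Rightarrow> bool" where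
  "C1_on S f \<longleftrightarrow>
     (\<forall>b\<in>Basis. (\<forall>x\<in>S. (\<lambda>s. f (x + s *\<^sub>R b)) differentiable (at 0))
                 \<and> continuous_on S (pd f b))"

definition C2_on :: "'a::euclidean_space set \<Rightarrow> ('a \<Rightarrow> 'b::real_normed_vector) \<Rightarrow> bool" where
  "C2_on S f \<longleftrightarrow> C1_on S f \<and> (\<forall>b\<in>Basis. C1_on S (pd f b))"

definition vrho :: "(quat^('n::finite) \<Rightarrow> real) \<Rightarrow> quat^'n \<Rightarrow> quat^'n" where
  "vrho \<rho> z = (\<chi> l. \<Sum>m\<in>UNIV. pd \<rho> (qe l m) z *\<^sub>R qS m)"

definition qbd_map :: "('n::finite) hq set \<Rightarrow> ('n hq \<times> 'n hq \<Rightarrow> 'n hq) \<Rightarrow> bool" where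
  "qbd_map U \<psi> \<longleftrightarrow> bounded U \<and> open U \<and>
     (\<exists>V. open V \<and> frontier U \<subseteq> V \<and> C1_on (V \<times> U) \<psi>) \<and>
     (\<forall>\<zeta>\<in>frontier U. \<forall>z\<in>U. qinner (\<psi> (\<zeta>, z)) (\<zeta> - z) \<noteq> 0)"

end

theory Submission imports Defs begin

lemma line_mvt:
  fixes f :: "'a::real_normed_vector \<Rightarrow> real"
  assumes D: "\<And>y. ((\<lambda>s. f (y + s *\<^sub>R c)) has_real_derivative D y) (at 0)"
  shows "\<exists>\<theta>. \<bar>\<theta>\<bar> \<le> \<bar>t\<bar> \<and> f (p + t *\<^sub>R c) - f p = t * D (p + \<theta> *\<^sub>R c)"
proof -
  have der: "((\<lambda>s. f (p + s *\<^sub>R c)) has_real_derivative D (p + s0 *\<^sub>R c)) (at s0)" for s0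
  proof -
    have "((\<lambda>u. f ((p + s0 *\<^sub>R c) + u *\<^sub>R c)) has_real_derivative D (p + s0 *\<^sub>R c)) (at 0)"
      by (rule D)
    moreover have "(\<lambda>u. f ((p + s0 *\<^sub>R c) + u *\<^sub>R c)) = (\<lambda>u. f (p + (u + s0) *\<^sub>R c))"
      by (simp add: scaleR_add_left add_ac)
    ultimately have "((\<lambda>u. f (p + (u + s0) *\<^sub>R c)) has_real_derivative D (p + s0 *\<^sub>R c)) (at 0)"
      by simp
    then show ?thesis
      using DERIV_shift[of "\<lambda>s. f (p + s *\<^sub>R c)" "D (p + s0 *\<^sub>R c)" 0 s0] by simp
  qed
  consider "t = 0" | "t > 0" | "t < 0" by linarith
  then show ?thesis
  proof cases
    case 1 then show ?thesis by (intro exI[of _ 0]) simp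
  next
    case 2
    obtain z where "0 < z" "z < t" "f (p + t *\<^sub>R c) - f (p + 0 *\<^sub>R c) = (t - 0) * D (p + z *\<^sub>R c)"
      using MVT2[OF 2, of "\<lambda>s. f (p + s *\<^sub>R c)" "\<lambda>s. D (p + s *\<^sub>R c)"] der by blast
    then show ?thesis by (intro exI[of _ z]) auto
  next
    case 3
    obtain z where "t < z" "z < 0" "f (p + 0 *\<^sub>R c) - f (p + t *\<^sub>R c) = (0 - t) * D (p + z *\<^sub>R c)"
      using MVT2[OF 3, of "\<lambda>s. f (p + s *\<^sub>R c)" "\<lambda>s. D (p + s *\<^sub>R c)"] der by blast
    then show ?thesis by (intro exI[of _ z]) (auto simp: algebra_simps)
  qed
qed

lemma partials_has_derivative:
  fixes f :: "'a::euclidean_space \<Rightarrow> real"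
  assumes D: "\<And>b y. b \<in> Basis \<Longrightarrow> ((\<lambda>s. f (y + s *\<^sub>R b)) has_real_derivative D b y) (at 0)"
    and C: "\<And>b. b \<in> Basis \<Longrightarrow> continuous_on UNIV (D b)"
  shows "(f has_derivative (\<lambda>h. \<Sum>b\<in>Basis. (h \<bullet> b) * D b x)) (at x)"
proof -
  have step: "\<forall>e>0. \<exists>d>0. \<forall>h. norm h < d \<longrightarrow>
      \<bar>f (x + (\<Sum>b\<in>B. (h \<bullet> b) *\<^sub>R b)) - f x - (\<Sum>b\<in>B. (h \<bullet> b) * D b x)\<bar> \<le> e * norm h"
    if "B \<subseteq> Basis" for B
  proof -
    have "finite B" using that finite_subset finite_Basis by blast
    from this that show ?thesis
    proof (induction B rule: finite_induct)
      case empty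
      then show ?case by (auto intro!: exI[of _ 1])
    next
      case (insert c B)
      have cB: "c \<in> Basis" and BB: "B \<subseteq> Basis" using insert.prems by auto
      show ?case
      proof (intro allI impI)
        fix e :: real assume e: "e > 0"
        obtain d1 where d1: "d1 > 0" "\<And>h. norm h < d1 \<Longrightarrow>
           \<bar>f (x + (\<Sum>b\<in>B. (h \<bullet> b) *\<^sub>R b)) - f x - (\<Sum>b\<in>B. (h \<bullet> b) * D b x)\<bar> \<le> (e/2) * norm h"
          using insert.IH[OF BB] e by (meson half_gt_zero)
        have "isCont (D c) x" using C[OF cB] by (simp add: continuous_on_eq_continuous_at)
        then obtain d2 where d2: "d2 > 0" "\<And>y. dist y x < d2 \<Longrightarrow> dist (D c y) (D c x) < e/2"
          using e unfolding continuous_at_eps_delta by (meson half_gt_zero)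
        define d where "d = min d1 (d2 / (real DIM('a) + 1))"
        have "d > 0" using d1 d2 by (simp add: d_def)
        moreover have "\<bar>f (x + (\<Sum>b\<in>insert c B. (h \<bullet> b) *\<^sub>R b)) - f x - (\<Sum>b\<in>insert c B. (h \<bullet> b) * D b x)\<bar> \<le> e * norm h"
          if h: "norm h < d" for h
        proof -
          define p where "p = x + (\<Sum>b\<in>B. (h \<bullet> b) *\<^sub>R b)"
          define t where "t = h \<bullet> c"
          obtain \<theta> where th: "\<bar>\<theta>\<bar> \<le> \<bar>t\<bar>" and mv: "f (p + t *\<^sub>R c) - f p = t * D c (p + \<theta> *\<^sub>R c)"
            using line_mvt[of f c "D c", OF D[OF cB]] by blast
          have eq1: "x + (\<Sum>b\<in>insert c B. (h \<bullet> b) *\<^sub>R b) = p + t *\<^sub>R c"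
            using insert.hyps by (simp add: p_def t_def algebra_simps)
          have eq2: "(\<Sum>b\<in>insert c B. (h \<bullet> b) * D b x) = t * D c x + (\<Sum>b\<in>B. (h \<bullet> b) * D b x)"
            using insert.hyps by (simp add: t_def)
          have tle: "\<bar>t\<bar> \<le> norm h" using Basis_le_norm[OF cB] by (simp add: t_def)
          have "norm (\<Sum>b\<in>B. (h \<bullet> b) *\<^sub>R b) \<le> (\<Sum>b\<in>B. norm ((h \<bullet> b) *\<^sub>R b))" by (rule norm_sum)
          also have "\<dots> \<le> (\<Sum>b\<in>B. norm h)"
            by (rule sum_mono) (use BB Basis_le_norm in \<open>auto simp: subset_iff\<close>)
          also have "\<dots> = real (card B) * norm h" by simp
          also have "\<dots> \<le> real DIM('a) * norm h"
            using card_mono[OF finite_Basis BB] by (simp add: mult_right_mono)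
          finally have nS: "norm (\<Sum>b\<in>B. (h \<bullet> b) *\<^sub>R b) \<le> real DIM('a) * norm h" .
          have "dist (p + \<theta> *\<^sub>R c) x = norm ((\<Sum>b\<in>B. (h \<bullet> b) *\<^sub>R b) + \<theta> *\<^sub>R c)"
            by (simp add: p_def dist_norm)
          also have "\<dots> \<le> norm (\<Sum>b\<in>B. (h \<bullet> b) *\<^sub>R b) + \<bar>\<theta>\<bar>"
            using norm_triangle_ineq[of "\<Sum>b\<in>B. (h \<bullet> b) *\<^sub>R b" "\<theta> *\<^sub>R c"] cB by simp
          also have "\<dots> \<le> (real DIM('a) + 1) * norm h" using nS th tle by (simp add: algebra_simps)
          also have "\<dots> < d2"
          proof -
            have "norm h < d2 / (real DIM('a) + 1)" using h by (simp add: d_def)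
            then show ?thesis by (simp add: field_simps)
          qed
          finally have "dist (p + \<theta> *\<^sub>R c) x < d2" .
          then have dD: "\<bar>D c (p + \<theta> *\<^sub>R c) - D c x\<bar> < e/2" using d2 by (simp add: dist_real_def)
          have hd1: "norm h < d1" using h by (simp add: d_def)
          have A: "\<bar>f p - f x - (\<Sum>b\<in>B. (h \<bullet> b) * D b x)\<bar> \<le> e/2 * norm h"
            using d1(2)[OF hd1] p_def by simp
          have B: "\<bar>t * (D c (p + \<theta> *\<^sub>R c) - D c x)\<bar> \<le> e/2 * norm h"
          proof -
            have "\<bar>t * (D c (p + \<theta> *\<^sub>R c) - D c x)\<bar> = \<bar>t\<bar> * \<bar>D c (p + \<theta> *\<^sub>R c) - D c x\<bar>"
              by (simp add: abs_mult)
            also have "\<dots> \<le> norm h * (e/2)"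
              using tle dD by (intro mult_mono) auto
            finally show ?thesis by (simp only: mult.commute)
          qed
          have "f (x + (\<Sum>b\<in>insert c B. (h \<bullet> b) *\<^sub>R b)) - f x - (\<Sum>b\<in>insert c B. (h \<bullet> b) * D b x)
              = (f p - f x - (\<Sum>b\<in>B. (h \<bullet> b) * D b x)) + t * (D c (p + \<theta> *\<^sub>R c) - D c x)"
            using eq1 eq2 mv by (simp add: algebra_simps)
          then have "\<bar>f (x + (\<Sum>b\<in>insert c B. (h \<bullet> b) *\<^sub>R b)) - f x - (\<Sum>b\<in>insert c B. (h \<bullet> b) * D b x)\<bar>
              \<le> \<bar>f p - f x - (\<Sum>b\<in>B. (h \<bullet> b) * D b x)\<bar> + \<bar>t * (D c (p + \<theta> *\<^sub>R c) - D c x)\<bar>"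
            by (simp only: abs_triangle_ineq)
          also have "\<dots> \<le> e/2 * norm h + e/2 * norm h" using A B by (rule add_mono)
          finally show ?thesis by simp
        qed
        ultimately show "\<exists>d>0. \<forall>h. norm h < d \<longrightarrow>
           \<bar>f (x + (\<Sum>b\<in>insert c B. (h \<bullet> b) *\<^sub>R b)) - f x - (\<Sum>b\<in>insert c B. (h \<bullet> b) * D b x)\<bar> \<le> e * norm h"
          by blast
      qed
    qed
  qed
  from step[OF order_refl] have S: "\<forall>e>0. \<exists>d>0. \<forall>h. norm h < d \<longrightarrow>
      \<bar>f (x + h) - f x - (\<Sum>b\<in>Basis. (h \<bullet> b) * D b x)\<bar> \<le> e * norm h"
    by (simp add: euclidean_representation)
  show ?thesis unfolding has_derivative_at_alt
  proof (intro conjI allI impI)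
    show "bounded_linear (\<lambda>h. \<Sum>b\<in>Basis. (h \<bullet> b) * D b x)"
      by (intro bounded_linear_sum bounded_linear_mult_const bounded_linear_inner_left)
    fix e :: real assume "e > 0"
    then obtain d where d: "d > 0" "\<And>h. norm h < d \<Longrightarrow>
      \<bar>f (x + h) - f x - (\<Sum>b\<in>Basis. (h \<bullet> b) * D b x)\<bar> \<le> e * norm h"
      using S by blast
    show "\<exists>d>0. \<forall>y. norm (y - x) < d \<longrightarrow> norm (f y - f x - (\<Sum>b\<in>Basis. ((y - x) \<bullet> b) * D b x)) \<le> e * norm (y - x)"
    proof (intro exI[of _ d] conjI allI impI)
      fix y assume "norm (y - x) < d"
      from d(2)[OF this] show "norm (f y - f x - (\<Sum>b\<in>Basis. ((y - x) \<bullet> b) * D b x)) \<le> e * norm (y - x)"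
        by simp
    qed (rule d(1))
  qed
qed


lemma line_deriv:
  fixes f :: "'a::euclidean_space \<Rightarrow> real"
  assumes "(f has_derivative (\<lambda>h. \<Sum>b\<in>Basis. (h \<bullet> b) * D b (x + s *\<^sub>R d))) (at (x + s *\<^sub>R d))"
  shows "((\<lambda>s. f (x + s *\<^sub>R d)) has_real_derivative (\<Sum>b\<in>Basis. (d \<bullet> b) * D b (x + s *\<^sub>R d))) (at s)"
proof -
  have l: "((\<lambda>s. x + s *\<^sub>R d) has_derivative (\<lambda>u. u *\<^sub>R d)) (at s)"
    by (auto intro!: derivative_eq_intros)
  have "(f \<circ> (\<lambda>s. x + s *\<^sub>R d) has_derivative
      (\<lambda>h. \<Sum>b\<in>Basis. (h \<bullet> b) * D b (x + s *\<^sub>R d)) \<circ> (\<lambda>u. u *\<^sub>R d)) (at s)"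
    using diff_chain_at[OF l] assms by blast
  moreover have "(\<lambda>h. \<Sum>b\<in>Basis. (h \<bullet> b) * D b (x + s *\<^sub>R d)) \<circ> (\<lambda>u. u *\<^sub>R d)
      = (*) (\<Sum>b\<in>Basis. (d \<bullet> b) * D b (x + s *\<^sub>R d))"
    by (auto simp: fun_eq_iff sum_distrib_left sum_distrib_right algebra_simps)
  ultimately show ?thesis by (simp add: has_field_derivative_def o_def)
qed

lemma convex1d:
  fixes g g' g'' :: "real \<Rightarrow> real"
  assumes d1: "\<And>s. (g has_real_derivative g' s) (at s)"
    and d2: "\<And>s. (g' has_real_derivative g'' s) (at s)"
    and c: "\<And>s. g'' s \<ge> c"
  shows "g 1 \<ge> g 0 + g' 0 + c/2"
proof -
  define h where "h s = g s - c * s^2 / 2" for s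
  define h' where "h' s = g' s - c * s" for s
  have hd: "(h has_real_derivative h' s) (at s)" for s
    unfolding h_def h'_def by (auto intro!: derivative_eq_intros d1)
  have hd2: "(h' has_real_derivative (g'' s - c)) (at s)" for s
    unfolding h'_def by (auto intro!: derivative_eq_intros d2)
  obtain z where z: "0 < z" "z < 1" "h 1 - h 0 = (1 - 0) * h' z"
    using MVT2[of 0 1 h h'] hd by auto
  obtain w where w: "0 < w" "w < z" "h' z - h' 0 = (z - 0) * (g'' w - c)"
    using MVT2[OF z(1), of h' "\<lambda>s. g'' s - c"] hd2 by auto
  have "h' z - h' 0 \<ge> 0" using w z c[of w] by simp
  then show ?thesis using z(3) by (simp add: h_def h'_def)
qed

lemma C1_deriv:
  fixes f :: "'a::euclidean_space \<Rightarrow> real"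
  assumes "C1_on UNIV f" "b \<in> Basis"
  shows "((\<lambda>s. f (y + s *\<^sub>R b)) has_real_derivative pd f b y) (at 0)"
    and "continuous_on UNIV (pd f b)"
proof -
  have "(\<lambda>s. f (y + s *\<^sub>R b)) differentiable (at 0)" using assms by (auto simp: C1_on_def)
  then show "((\<lambda>s. f (y + s *\<^sub>R b)) has_real_derivative pd f b y) (at 0)"
    unfolding pd_def has_real_derivative_iff_has_vector_derivative
    by (simp add: vector_derivative_works[symmetric])
  show "continuous_on UNIV (pd f b)" using assms by (auto simp: C1_on_def)
qed

lemma key:
  fixes \<rho> :: "'a::euclidean_space \<Rightarrow> real"
  assumes C2: "C2_on UNIV \<rho>"
    and convex: "\<And>z t. (\<Sum>b\<in>Basis. \<Sum>c\<in>Basis. pd (pd \<rho> b) c z * (t \<bullet> b) * (t \<bullet> c))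
                        \<ge> \<epsilon> * (norm t)\<^sup>2"
  shows "\<rho> (x + d) \<ge> \<rho> x + (\<Sum>b\<in>Basis. (d \<bullet> b) * pd \<rho> b x) + \<epsilon> * (norm d)\<^sup>2 / 2"
proof -
  have C1: "C1_on UNIV \<rho>" and C1': "\<And>b. b \<in> Basis \<Longrightarrow> C1_on UNIV (pd \<rho> b)"
    using C2 by (auto simp: C2_on_def)
  have F: "(\<rho> has_derivative (\<lambda>h. \<Sum>b\<in>Basis. (h \<bullet> b) * pd \<rho> b y)) (at y)" for y
    by (rule partials_has_derivative) (use C1_deriv[OF C1] in auto)
  have F': "(pd \<rho> b has_derivative (\<lambda>h. \<Sum>c\<in>Basis. (h \<bullet> c) * pd (pd \<rho> b) c y)) (at y)"
    if "b \<in> Basis" for b y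
    by (rule partials_has_derivative) (use C1_deriv[OF C1'[OF that]] in auto)
  define g where "g s = \<rho> (x + s *\<^sub>R d)" for s
  define g' where "g' s = (\<Sum>b\<in>Basis. (d \<bullet> b) * pd \<rho> b (x + s *\<^sub>R d))" for s
  define g'' where "g'' s = (\<Sum>b\<in>Basis. (d \<bullet> b) * (\<Sum>c\<in>Basis. (d \<bullet> c) * pd (pd \<rho> b) c (x + s *\<^sub>R d)))" for s
  have d1: "(g has_real_derivative g' s) (at s)" for s
    unfolding g_def g'_def by (rule line_deriv) (rule F)
  have d2: "(g' has_real_derivative g'' s) (at s)" for s
    unfolding g'_def g''_def
    by (intro DERIV_sum DERIV_cmult line_deriv F')
  have c: "g'' s \<ge> \<epsilon> * (norm d)\<^sup>2" for s
  proof -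
    have "g'' s = (\<Sum>b\<in>Basis. \<Sum>c\<in>Basis. pd (pd \<rho> b) c (x + s *\<^sub>R d) * (d \<bullet> b) * (d \<bullet> c))"
      unfolding g''_def by (simp add: sum_distrib_left algebra_simps)
    then show ?thesis using convex by simp
  qed
  have "g 1 \<ge> g 0 + g' 0 + \<epsilon> * (norm d)\<^sup>2 / 2"
    by (rule convex1d[OF d1 d2 c])
  then show ?thesis by (simp add: g_def g'_def)
qed


lemma q1: "qmult (qconj a) b $ 1 = (\<Sum>m\<in>UNIV. a$m * b$m)"
  by (simp add: qmult_def qconj_def vector_def sum_4)

lemma Basis_hq: "(Basis :: ('n::finite) hq set) = (\<lambda>(l,m). qe l m) ` UNIV"
  by (auto simp: Basis_vec_def qe_def image_iff)

lemma inj_qe: "inj (\<lambda>(l,m). qe l m :: ('n::finite) hq)"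
  by (auto simp: inj_def qe_def axis_eq_axis)

lemma sum_Basis_hq: "(\<Sum>b\<in>(Basis:: ('n::finite) hq set). f b) = (\<Sum>l\<in>UNIV. \<Sum>m\<in>UNIV. f (qe l m))"
proof -
  have "(\<Sum>b\<in>(Basis:: ('n::finite) hq set). f b) = (\<Sum>p\<in>UNIV. f ((\<lambda>(l,m). qe l m) p))"
    unfolding Basis_hq by (rule sum.reindex[OF inj_qe, unfolded o_def])
  also have "\<dots> = (\<Sum>(l,m)\<in>UNIV \<times> UNIV. f (qe l m))"
    by (simp add: case_prod_unfold UNIV_Times_UNIV)
  also have "\<dots> = (\<Sum>l\<in>UNIV. \<Sum>m\<in>UNIV. f (qe l m))"
    by (rule sum.cartesian_product[symmetric])
  finally show ?thesis .
qed

lemma inner_qe: "w \<bullet> qe l m = w $ l $ m"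
  by (simp add: qe_def inner_axis)

lemma vrho_comp: "vrho \<rho> z $ l $ m = pd \<rho> (qe l m) z"
  by (simp add: vrho_def qS_def axis_def if_distrib sum.delta cong: if_cong)

lemma vrho_inner: "b \<in> Basis \<Longrightarrow> vrho \<rho> z \<bullet> b = pd \<rho> b z"
  by (auto simp: Basis_hq inner_qe vrho_comp)

lemma vrho_sum: "vrho \<rho> z = (\<Sum>b\<in>Basis. pd \<rho> b z *\<^sub>R b)"
proof (rule euclidean_eqI)
  fix b' :: "'a hq" assume b': "b' \<in> Basis"
  have "(\<Sum>b\<in>Basis. pd \<rho> b z *\<^sub>R b) \<bullet> b' = (\<Sum>b\<in>Basis. pd \<rho> b z * (if b = b' then 1 else 0))"
    unfolding inner_sum_left using b' by (intro sum.cong) (auto simp: inner_Basis)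
  also have "\<dots> = pd \<rho> b' z" using b' by (simp add: if_distrib sum.delta cong: if_cong)
  finally show "vrho \<rho> z \<bullet> b' = (\<Sum>b\<in>Basis. pd \<rho> b z *\<^sub>R b) \<bullet> b'"
    using vrho_inner[OF b'] by simp
qed

lemma qinner1: "qinner v w $ 1 = (\<Sum>b\<in>Basis. (v \<bullet> b) * (w \<bullet> b))"
  by (simp add: qinner_def sum_Basis_hq inner_qe q1)


theorem lemma3p9:
  fixes \<rho> :: "real^4^'n \<Rightarrow> real" and \<epsilon>\<^sub>0 :: real
  assumes C2: "C2_on UNIV \<rho>"
    and eps_pos: "\<epsilon>\<^sub>0 > 0"
    and convex: "\<And>z t. (\<Sum>b\<in>Basis. \<Sum>c\<in>Basis. pd (pd \<rho> b) c z * (t \<bullet> b) * (t \<bullet> c))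
                        \<ge> \<epsilon>\<^sub>0 * (norm t)\<^sup>2"
  shows "C1_on UNIV (vrho \<rho>)
    \<and> qbd_map {z. \<rho> z < 0} (\<lambda>(\<zeta>, z). vrho \<rho> \<zeta>)
    \<and> (\<forall>\<zeta>\<in>frontier {z. \<rho> z < 0}. \<forall>z\<in>{z. \<rho> z < 0}. qinner (vrho \<rho> \<zeta>) (\<zeta> - z) \<noteq> 0)"
proof -
  define U where "U = {z. \<rho> z < 0}"
  have C1: "C1_on UNIV \<rho>" and C1': "\<And>b. b \<in> Basis \<Longrightarrow> C1_on UNIV (pd \<rho> b)"
    using C2 by (auto simp: C2_on_def)
  have F: "(\<rho> has_derivative (\<lambda>h. \<Sum>b\<in>Basis. (h \<bullet> b) * pd \<rho> b y)) (at y)" for y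
    by (rule partials_has_derivative) (use C1_deriv[OF C1] in auto)
  have contr: "continuous_on UNIV \<rho>"
    using F by (meson continuous_at_imp_continuous_on has_derivative_continuous)
  have K: "\<rho> (x + d) \<ge> \<rho> x + (\<Sum>b\<in>Basis. (d \<bullet> b) * pd \<rho> b x) + \<epsilon>\<^sub>0 * (norm d)\<^sup>2 / 2" for x d
    by (rule key[OF C2 convex])
  have K': "\<rho> (x + d) \<ge> \<rho> x + (\<Sum>b\<in>Basis. (d \<bullet> b) * pd \<rho> b x)" for x d
  proof -
    have "\<epsilon>\<^sub>0 * (norm d)\<^sup>2 / 2 \<ge> 0" using eps_pos by simp
    then show ?thesis using K[of x d] by linarith
  qed
  have openU: "open U" unfolding U_def
    by (rule open_Collect_less[OF contr continuous_on_const])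
  have main: "qinner (vrho \<rho> \<zeta>) (\<zeta> - z) \<noteq> 0" if "\<zeta> \<in> frontier U" "z \<in> U" for \<zeta> z
  proof -
    have "\<zeta> \<notin> U" using that(1) openU by (simp add: frontier_def interior_open)
    then have r\<zeta>: "\<rho> \<zeta> \<ge> 0" by (simp add: U_def)
    have rz: "\<rho> z < 0" using that(2) by (simp add: U_def)
    have "\<rho> (\<zeta> + (z - \<zeta>)) \<ge> \<rho> \<zeta> + (\<Sum>b\<in>Basis. ((z - \<zeta>) \<bullet> b) * pd \<rho> b \<zeta>)" by (rule K')
    then have A: "\<rho> z \<ge> \<rho> \<zeta> + (\<Sum>b\<in>Basis. ((z - \<zeta>) \<bullet> b) * pd \<rho> b \<zeta>)" by simp
    have "qinner (vrho \<rho> \<zeta>) (\<zeta> - z) $ 1 = (\<Sum>b\<in>Basis. pd \<rho> b \<zeta> * ((\<zeta> - z) \<bullet> b))"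
      unfolding qinner1 by (intro sum.cong) (auto simp: vrho_inner)
    also have "\<dots> = - (\<Sum>b\<in>Basis. ((z - \<zeta>) \<bullet> b) * pd \<rho> b \<zeta>)"
      by (simp add: sum_negf[symmetric] inner_diff_left algebra_simps)
    finally have "qinner (vrho \<rho> \<zeta>) (\<zeta> - z) $ 1 > 0" using A r\<zeta> rz by linarith
    then show ?thesis by auto
  qed
  have bdd: "bounded U"
  proof -
    define Kc where "Kc = (\<Sum>b\<in>Basis. \<bar>pd \<rho> b 0\<bar>)"
    define a where "a = max 1 (2 * (Kc + \<bar>\<rho> 0\<bar>) / \<epsilon>\<^sub>0)"
    have "norm d \<le> a" if "d \<in> U" for d
    proof (rule ccontr)
      assume "\<not> norm d \<le> a"
      then have n1: "norm d > 1" and n2: "norm d > 2 * (Kc + \<bar>\<rho> 0\<bar>) / \<epsilon>\<^sub>0"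
        by (auto simp: a_def)
      have "\<bar>\<Sum>b\<in>Basis. (d \<bullet> b) * pd \<rho> b 0\<bar> \<le> (\<Sum>b\<in>Basis. \<bar>(d \<bullet> b) * pd \<rho> b 0\<bar>)"
        by (rule sum_abs)
      also have "\<dots> \<le> (\<Sum>b\<in>Basis. norm d * \<bar>pd \<rho> b 0\<bar>)"
        by (intro sum_mono) (auto simp: abs_mult intro: mult_right_mono Basis_le_norm)
      also have "\<dots> = norm d * Kc" by (simp add: Kc_def sum_distrib_left)
      finally have S: "\<bar>\<Sum>b\<in>Basis. (d \<bullet> b) * pd \<rho> b 0\<bar> \<le> norm d * Kc" .
      have "\<epsilon>\<^sub>0 * norm d > 2 * (Kc + \<bar>\<rho> 0\<bar>)" using n2 eps_pos by (simp add: field_simps)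
      then have m1: "\<epsilon>\<^sub>0 * norm d * norm d > 2 * (Kc + \<bar>\<rho> 0\<bar>) * norm d"
        using n1 by (intro mult_strict_right_mono) auto
      have m2: "(Kc + \<bar>\<rho> 0\<bar>) * norm d \<ge> Kc * norm d + \<bar>\<rho> 0\<bar>"
        using n1 mult_right_mono[of 1 "norm d" "\<bar>\<rho> 0\<bar>"] by (simp add: algebra_simps)
      have e1: "\<epsilon>\<^sub>0 * (norm d)\<^sup>2 / 2 = (\<epsilon>\<^sub>0 * norm d * norm d) / 2"
        by (simp add: power2_eq_square)
      have e2: "2 * (Kc + \<bar>\<rho> 0\<bar>) * norm d = 2 * ((Kc + \<bar>\<rho> 0\<bar>) * norm d)"
        by simp
      have "\<epsilon>\<^sub>0 * (norm d)\<^sup>2 / 2 > Kc * norm d + \<bar>\<rho> 0\<bar>"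
        unfolding e1 using m1 m2 e2 by linarith
      moreover have "\<rho> (0 + d) \<ge> \<rho> 0 + (\<Sum>b\<in>Basis. (d \<bullet> b) * pd \<rho> b 0) + \<epsilon>\<^sub>0 * (norm d)\<^sup>2 / 2"
        by (rule K)
      ultimately have "\<rho> d > 0" using S using abs_le_D2[OF S] by (simp add: mult.commute)
      then show False using that by (simp add: U_def)
    qed
    then show ?thesis unfolding bounded_iff by blast
  qed
  define W where "W b x = (\<Sum>b'\<in>Basis. pd (pd \<rho> b') b x *\<^sub>R b')" for b x
  have VD: "((\<lambda>s. vrho \<rho> (x + s *\<^sub>R b)) has_vector_derivative W b x) (at 0)" if b: "b \<in> Basis" for b x
  proof -
    have "((\<lambda>s. \<Sum>b'\<in>Basis. pd \<rho> b' (x + s *\<^sub>R b) *\<^sub>R b') has_vector_derivative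
        (\<Sum>b'\<in>Basis. pd \<rho> b' (x + 0 *\<^sub>R b) *\<^sub>R 0 + pd (pd \<rho> b') b x *\<^sub>R b')) (at 0)"
      by (intro has_vector_derivative_sum has_vector_derivative_scaleR has_vector_derivative_const
          C1_deriv(1)[OF C1' b]) 
    then show ?thesis by (simp add: W_def vrho_sum[abs_def])
  qed
  have PV: "pd (vrho \<rho>) b x = W b x" if "b \<in> Basis" for b x
    unfolding pd_def by (rule vector_derivative_at[OF VD[OF that]])
  have CW: "continuous_on S (W b)" if "b \<in> Basis" for b S
    unfolding W_def
    by (intro continuous_on_sum continuous_on_scaleR continuous_on_const
        continuous_on_subset[OF C1_deriv(2)[OF C1'] subset_UNIV]) (use that in auto)
  have C1v: "C1_on UNIV (vrho \<rho>)"
    unfolding C1_on_def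
  proof (rule ballI, rule conjI)
    fix b :: "real^4^'n" assume b: "b \<in> Basis"
    show "\<forall>x\<in>UNIV. (\<lambda>s. vrho \<rho> (x + s *\<^sub>R b)) differentiable at 0"
      using VD[OF b] differentiableI_vector by blast
    show "continuous_on UNIV (pd (vrho \<rho>) b)"
      using CW[OF b] PV[OF b] by (simp add: fun_eq_iff[symmetric] ext)
  qed
  have psi: "(\<lambda>(\<zeta>, z). vrho \<rho> \<zeta>) = (\<lambda>p. vrho \<rho> (fst p))" by auto
  have C1psi: "C1_on (UNIV \<times> U) (\<lambda>(\<zeta>, z). vrho \<rho> \<zeta>)"
    unfolding C1_on_def psi
  proof (rule ballI, rule conjI)
    fix b :: "(real^4^'n) \<times> (real^4^'n)" assume b: "b \<in> Basis"
    then have cs: "(\<exists>c\<in>Basis. b = (c, 0)) \<or> (\<exists>c\<in>Basis. b = (0, c))"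
      by (auto simp: Basis_prod_def)
    show "\<forall>x\<in>UNIV \<times> U. (\<lambda>s. vrho \<rho> (fst (x + s *\<^sub>R b))) differentiable at 0"
      using cs
    proof
      assume "\<exists>c\<in>Basis. b = (c, 0)"
      then obtain c where c: "c \<in> Basis" "b = (c, 0)" by blast
      show ?thesis
        using VD[OF c(1)] differentiableI_vector by (auto simp: c(2))
    next
      assume "\<exists>c\<in>Basis. b = (0, c)"
      then obtain c where c: "c \<in> Basis" "b = (0, c)" by blast
      show ?thesis by (auto simp: c(2))
    qed
    show "continuous_on (UNIV \<times> U) (pd (\<lambda>p. vrho \<rho> (fst p)) b)"
      using cs
    proof
      assume "\<exists>c\<in>Basis. b = (c, 0)"
      then obtain c where c: "c \<in> Basis" "b = (c, 0)" by blast
      have "pd (\<lambda>p. vrho \<rho> (fst p)) b = (\<lambda>p. W c (fst p))"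
        using PV[OF c(1)] by (auto simp: fun_eq_iff pd_def c(2))
      moreover have "continuous_on (UNIV \<times> U) (\<lambda>p. W c (fst p))"
        by (rule continuous_on_compose2[OF CW[OF c(1)], of _ fst]) (auto intro: continuous_intros)
      ultimately show ?thesis by simp
    next
      assume "\<exists>c\<in>Basis. b = (0, c)"
      then obtain c where c: "c \<in> Basis" "b = (0, c)" by blast
      have "pd (\<lambda>p. vrho \<rho> (fst p)) b = (\<lambda>p. 0)"
        by (auto simp: fun_eq_iff pd_def c(2))
      then show ?thesis by simp
    qed
  qed
  have "qbd_map U (\<lambda>(\<zeta>, z). vrho \<rho> \<zeta>)"
    unfolding qbd_map_def using bdd openU C1psi main by auto
  then show ?thesis using C1v main unfolding U_def by auto
qed

end
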